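(* Let $d\ge 1$ and let $P\subset\mathbb{R}^d$ be a finite set of $n\ge 1$ points. Then there exists $p\in P$ such that $p\in K$ for every skyline $K$ with $|K\cap P|>(1-\frac{1}{2d-1})n$.
   Context: A skyline in $\mathbb{R}^d$ is a set of the form $\{x\in\mathbb{R}^d: a_j\le x_j\le b_j \text{ for } 1\le j\le d-1,\ x_d\le b_d\}$ with real numbers $a_j\le b_j$ ($1\le j\le d-1$) and $b_d$; i.e., an axis-parallel box that is unbounded in the direction of the negative $x_d$-axis. *)

theory Defs
  imports "HOL-Analysis.Analysis"
begin

text \<open>Points of R^d are represented as functions nat => real whose coordinates
  0..d-1 are the d coordinates (coordinate j+1 of the paper is index j) and which vanish
  at all indices >= d.\<close>

definition euclid :: "nat \<Rightarrow> (nat \<Rightarrow> real) set" where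
  "euclid d = {x. \<forall>j\<ge>d. x j = 0}"

definition skyline :: "nat \<Rightarrow> (nat \<Rightarrow> real) \<Rightarrow> (nat \<Rightarrow> real) \<Rightarrow> (nat \<Rightarrow> real) set" where
  "skyline d a b = {x \<in> euclid d. (\<forall>j<d - 1. a j \<le> x j \<and> x j \<le> b j) \<and> x (d - 1) \<le> b (d - 1)}"

definition is_skyline :: "nat \<Rightarrow> (nat \<Rightarrow> real) set \<Rightarrow> bool" where
  "is_skyline d K \<longleftrightarrow> (\<exists>a b. (\<forall>j<d - 1. a j \<le> b j) \<and> K = skyline d a b)"

end

theory Submission
  imports Defs
begin

lemma bad_card:
  fixes f :: "'a \<Rightarrow> real"
  assumes "finite P" "c > 0"
  shows "real (card {p\<in>P. real (card {q\<in>P. f q \<le> f p}) < c}) \<le> c"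
proof (cases "{p\<in>P. real (card {q\<in>P. f q \<le> f p}) < c} = {}")
  case True then show ?thesis using assms by (simp only: card.empty)
next
  case False
  define B where "B = {p\<in>P. real (card {q\<in>P. f q \<le> f p}) < c}"
  have fB: "finite B" using assms unfolding B_def by simp
  have "Max (f ` B) \<in> f ` B" using False fB unfolding B_def by simp
  then obtain p where p: "p \<in> B" "f p = Max (f ` B)" by auto
  have "\<forall>q\<in>B. f q \<le> f p" using p fB by simp
  hence "B \<subseteq> {q\<in>P. f q \<le> f p}" unfolding B_def by auto
  hence "card B \<le> card {q\<in>P. f q \<le> f p}" using assms by (intro card_mono) auto
  moreover have "real (card {q\<in>P. f q \<le> f p}) < c" using p(1) unfolding B_def by simp
  ultimately show ?thesis unfolding B_def by linarith
qed

lemma ex_min: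
  fixes f :: "'a \<Rightarrow> real"
  assumes "finite R" "R \<noteq> {}"
  shows "\<exists>p\<in>R. \<forall>q\<in>R. f p \<le> f q"
proof -
  have "Min (f ` R) \<in> f ` R" using assms by simp
  then obtain p where p: "p \<in> R" "f p = Min (f ` R)" by auto
  have "\<forall>q\<in>R. f p \<le> f q" using p assms by simp
  thus ?thesis using p by blast
qed

theorem corollary2:
  fixes d :: nat and P :: "(nat \<Rightarrow> real) set"
  assumes "d \<ge> 1" and "finite P" and "P \<subseteq> euclid d" and "card P \<ge> 1"
  shows "\<exists>p\<in>P. \<forall>K. is_skyline d K \<and>
            real (card (K \<inter> P)) > (1 - 1 / (2 * real d - 1)) * real (card P)
            \<longrightarrow> p \<in> K"
proof -
  define n where "n = real (card P)"
  define c where "c = n / (2 * real d - 1)"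
  have dpos: "2 * real d - 1 \<ge> 1" using assms(1) by simp
  have npos: "n \<ge> 1" using assms(4) unfolding n_def by simp
  have cpos: "c > 0" unfolding c_def using dpos npos by simp
  have nc: "n = (2 * real d - 1) * c" unfolding c_def using dpos by simp
  define L where "L j = {p\<in>P. real (card {q\<in>P. q j \<le> p j}) < c}" for j
  define H where "H j = {p\<in>P. real (card {q\<in>P. (\<lambda>x. - x j) q \<le> (\<lambda>x. - x j) p}) < c}" for j
  have Lc: "real (card (L j)) \<le> c" for j unfolding L_def by (rule bad_card[OF assms(2) cpos])
  have Hc: "real (card (H j)) \<le> c" for j unfolding H_def by (rule bad_card[OF assms(2) cpos])
  define U where "U = (\<Union>j<d-1. L j \<union> H j)"
  have finU: "finite U" unfolding U_def L_def H_def using assms(2) by auto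
  have "card U \<le> (\<Sum>j<d-1. card (L j \<union> H j))" unfolding U_def by (rule card_UN_le) simp
  also have "\<dots> \<le> (\<Sum>j<d-1. card (L j) + card (H j))" by (intro sum_mono card_Un_le)
  finally have "real (card U) \<le> (\<Sum>j<d-1. real (card (L j)) + real (card (H j)))"
    by (metis (mono_tags, lifting) of_nat_add of_nat_le_iff of_nat_sum sum.cong)
  also have "\<dots> \<le> (\<Sum>j<d-1. 2 * c)" 
  proof (rule sum_mono)
    fix j show "real (card (L j)) + real (card (H j)) \<le> 2 * c" using Lc[of j] Hc[of j] by linarith
  qed
  also have "\<dots> = 2 * real (d - 1) * c" by simp
  finally have Ub: "real (card U) \<le> 2 * real (d - 1) * c" .
  define R where "R = P - U"
  have UP: "U \<subseteq> P" unfolding U_def L_def H_def by auto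
  have "card R = card P - card U" unfolding R_def using finU UP by (simp add: card_Diff_subset)
  hence "real (card R) = n - real (card U)" unfolding n_def using UP assms(2)
    by (simp add: card_mono of_nat_diff)
  also have "\<dots> \<ge> c" using Ub nc assms(1) by (simp add: of_nat_diff algebra_simps)
  finally have Rc: "real (card R) \<ge> c" by simp
  hence "R \<noteq> {}" using cpos by auto
  moreover have finR: "finite R" unfolding R_def using assms(2) by simp
  ultimately obtain p where pR: "p \<in> R" and pmin: "\<forall>q\<in>R. p (d-1) \<le> q (d-1)"
    using ex_min[of R "\<lambda>x. x (d-1)"] by auto
  have pP: "p \<in> P" using pR unfolding R_def by auto
  show ?thesis
  proof (intro bexI[OF _ pP] allI impI)
    fix K assume K: "is_skyline d K \<and> real (card (K \<inter> P)) > (1 - 1 / (2 * real d - 1)) * real (card P)"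
    then obtain a b where K_def: "K = skyline d a b" unfolding is_skyline_def by auto
    have e1: "card (P - K) = card P - card (P \<inter> K)" using assms(2) by (intro card_Diff_subset_Int) simp
    have e2: "card (P \<inter> K) \<le> card P" using assms(2) by (intro card_mono) auto
    have "P \<inter> K = K \<inter> P" by blast
    hence "card (P - K) + card (K \<inter> P) = card P" using e1 e2 by simp
    hence "real (card (P - K)) = n - real (card (K \<inter> P))" unfolding n_def by linarith
    moreover have "(1 - 1 / (2 * real d - 1)) * n = n - c" unfolding c_def using dpos
      by (simp add: field_simps)
    ultimately have out: "real (card (P - K)) < c" using K unfolding n_def by linarith
    have sub: "card S \<le> card (P - K)" if "S \<subseteq> P - K" for S
      using that assms(2) by (intro card_mono) auto
    have pe: "p \<in> euclid d" using pP assms(3) by auto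
    have pU: "p \<notin> U" using pR unfolding R_def by auto
    have lo: "a j \<le> p j" if j: "j < d - 1" for j
    proof (rule ccontr)
      assume "\<not> a j \<le> p j"
      hence "{q\<in>P. q j \<le> p j} \<subseteq> P - K" unfolding K_def skyline_def using j by auto
      hence "card {q\<in>P. q j \<le> p j} \<le> card (P - K)" by (rule sub)
      hence "real (card {q\<in>P. q j \<le> p j}) < c" using out by linarith
      hence "p \<in> L j" unfolding L_def using pP by auto
      thus False using pU j unfolding U_def by auto
    qed
    have hi: "p j \<le> b j" if j: "j < d - 1" for j
    proof (rule ccontr)
      assume "\<not> p j \<le> b j"
      hence "{q\<in>P. (\<lambda>x. - x j) q \<le> (\<lambda>x. - x j) p} \<subseteq> P - K" unfolding K_def skyline_def using j by auto
      hence "card {q\<in>P. (\<lambda>x. - x j) q \<le> (\<lambda>x. - x j) p} \<le> card (P - K)" by (rule sub)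
      hence "real (card {q\<in>P. (\<lambda>x. - x j) q \<le> (\<lambda>x. - x j) p}) < c" using out by linarith
      hence "p \<in> H j" unfolding H_def using pP by auto
      thus False using pU j unfolding U_def by auto
    qed
    have top: "p (d-1) \<le> b (d-1)"
    proof (rule ccontr)
      assume "\<not> p (d-1) \<le> b (d-1)"
      have "q \<notin> K" if "q \<in> R" for q
      proof
        assume "q \<in> K"
        hence "q (d-1) \<le> b (d-1)" unfolding K_def skyline_def by simp
        moreover have "p (d-1) \<le> q (d-1)" using pmin that by blast
        ultimately show False using \<open>\<not> p (d-1) \<le> b (d-1)\<close> by linarith
      qed
      hence "R \<subseteq> P - K" unfolding R_def by blast
      hence "card R \<le> card (P - K)" by (rule sub)
      thus False using Rc out by linarith
    qed
    show "p \<in> K" unfolding K_def skyline_def using pe lo hi top by auto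
  qed
qed

end
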